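(* Let $n\ge2$ and let $V$ be the potential of the planar $n$-body problem with all masses equal. Let $c\in\mathbb{R}^{2n}$ be the regular $n$-gon configuration $c_i=\alpha\cos\frac{2\pi(i-1)}n$, $c_{i+n}=\alpha\sin\frac{2\pi(i-1)}n$ ($i=1,\dots,n$), with $\alpha>0$ chosen so that $c$ is a Darboux point with multiplier $-1$. Let $v\in\mathbb{R}^{2n}$ be given by $v_i=\cos\frac{4\pi(i-1)}n$, $v_{i+n}=\sin\frac{4\pi(i-1)}n$. Then $Wv=J^{-1}WJv=\lambda v$ with $$\lambda=2-\frac{2\sin(\pi/n)}{1-\cos(\pi/n)}\Big(\sum_{j=1}^{n-1}\frac1{\sin(\pi j/n)}\Big)^{-1}.$$
   Context: Positions $q\in\mathbb{C}^{2n}$, body $i$ at $(q_i,q_{i+n})$, masses $m_i=m>0$ for all $i$ and $m_{i+n}:=m_i$. $V(q)=\sum_{i<j}\frac{m_im_j}{\sqrt{(q_i-q_j)^2+(q_{i+n}-q_{j+n})^2}}$. Darboux point with multiplier $-1$: $\partial V/\partial q_k(c)=-m_kc_k$ for all $k$. $W_{k,l}=\frac1{m_k}\frac{\partial^2V}{\partial q_k\partial q_l}(c)$. $J=\begin{pmatrix}0&-I_n\\ I_n&0\end{pmatrix}$. *)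

theory Defs
  imports "HOL-Analysis.Analysis"
begin

text \<open>Configurations in R^(2n) are functions nat => real, indices 0..2n-1 (0-based);
 body i (i < n) sits at (q i, q (i+n)). All masses equal m.\<close>

definition nbody_V :: "nat \<Rightarrow> real \<Rightarrow> (nat \<Rightarrow> real) \<Rightarrow> real" where
  "nbody_V n m q = (\<Sum>i<n. \<Sum>j\<in>{i<..<n}.
      m * m / sqrt ((q i - q j)^2 + (q (i+n) - q (j+n))^2))"

definition pdiff :: "nat \<Rightarrow> ((nat \<Rightarrow> real) \<Rightarrow> real) \<Rightarrow> (nat \<Rightarrow> real) \<Rightarrow> real" where
  "pdiff k f q = deriv (\<lambda>t. f (q(k := q k + t))) 0"

definition darboux_point :: "nat \<Rightarrow> real \<Rightarrow> (nat \<Rightarrow> real) \<Rightarrow> bool" where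
  "darboux_point n m c \<longleftrightarrow> (\<forall>k<2*n. pdiff k (nbody_V n m) c = - m * c k)"

definition Wmat :: "nat \<Rightarrow> real \<Rightarrow> (nat \<Rightarrow> real) \<Rightarrow> nat \<Rightarrow> nat \<Rightarrow> real" where
  "Wmat n m c k l = (1 / m) * pdiff k (\<lambda>p. pdiff l (nbody_V n m) p) c"

definition matvec :: "nat \<Rightarrow> (nat \<Rightarrow> nat \<Rightarrow> real) \<Rightarrow> (nat \<Rightarrow> real) \<Rightarrow> nat \<Rightarrow> real" where
  "matvec d A v k = (\<Sum>l<d. A k l * v l)"

text \<open>J = [[0,-I],[I,0]] and its inverse J^{-1} = [[0,I],[-I,0]], as (2n)x(2n) matrices.\<close>
definition Jmat :: "nat \<Rightarrow> nat \<Rightarrow> nat \<Rightarrow> real" where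
  "Jmat n k l = (if k < n \<and> l = k + n then -1 else if n \<le> k \<and> k < 2*n \<and> l = k - n then 1 else 0)"

definition Jinv :: "nat \<Rightarrow> nat \<Rightarrow> nat \<Rightarrow> real" where
  "Jinv n k l = (if k < n \<and> l = k + n then 1 else if n \<le> k \<and> k < 2*n \<and> l = k - n then -1 else 0)"

end

theory Submission
  imports Defs
begin


lemma du:
  fixes A B ea eb :: real
  shows "((\<lambda>t. (A + t*ea)^2 + (B + t*eb)^2) has_real_derivative 2*(A*ea+B*eb)) (at 0)"
  by (auto intro!: derivative_eq_intros simp: algebra_simps)

lemma dsq:
  fixes A B ea eb :: real
  assumes "A^2 + B^2 > 0"
  shows "((\<lambda>t. sqrt ((A + t*ea)^2 + (B + t*eb)^2)) has_real_derivative (A*ea+B*eb) / sqrt (A^2+B^2)) (at 0)"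
proof -
  have D: "((\<lambda>t. sqrt ((A + t*ea)^2 + (B + t*eb)^2)) has_real_derivative
     inverse (sqrt ((A + 0*ea)^2 + (B + 0*eb)^2)) / 2 * (2*(A*ea+B*eb))) (at 0)"
    by (rule DERIV_chain2[OF DERIV_real_sqrt du]) (simp only: mult_zero_left add_0_right, rule assms)
  have g: "\<And>S. inverse S / 2 * (2*(A*ea+B*eb)) = (A*ea+B*eb) / S"
    by (simp add: divide_simps)
  have eq: "inverse (sqrt ((A + 0*ea)^2 + (B + 0*eb)^2)) / 2 * (2*(A*ea+B*eb)) = (A*ea+B*eb)/sqrt(A^2+B^2)"
    by (simp only: mult_zero_left add_0_right g)
  show ?thesis by (rule DERIV_cong[OF D eq])
qed

lemma d1:
  fixes A B ea eb M :: real
  assumes "A^2 + B^2 > 0"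
  shows "((\<lambda>t. M / sqrt ((A + t*ea)^2 + (B + t*eb)^2)) has_real_derivative
          (- M * (A*ea + B*eb) / sqrt (A^2+B^2)^3)) (at 0)"
proof -
  have s: "sqrt (A^2+B^2) \<noteq> 0" using real_sqrt_gt_zero[OF assms] by linarith
  have nz: "A = 0 \<longrightarrow> B \<noteq> 0" using assms by (cases "A = 0"; cases "B = 0") auto
  have D: "((\<lambda>t. M / sqrt ((A + t*ea)^2 + (B + t*eb)^2)) has_real_derivative
     (0 * sqrt ((A + 0*ea)^2 + (B + 0*eb)^2) - M * ((A*ea+B*eb) / sqrt (A^2+B^2))) / (sqrt ((A + 0*ea)^2 + (B + 0*eb)^2) * sqrt ((A + 0*ea)^2 + (B + 0*eb)^2))) (at 0)"
    by (rule DERIV_divide[OF DERIV_const dsq[OF assms]]) (simp; use nz in blast)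
  have e: "\<And>S. S \<noteq> 0 \<Longrightarrow> (0 - M * ((A*ea+B*eb) / S)) / (S * S) = - M * (A*ea + B*eb) / S^3"
    by (simp add: field_simps power3_eq_cube)
  have eq: "(0 * sqrt ((A + 0*ea)^2 + (B + 0*eb)^2) - M * ((A*ea+B*eb) / sqrt (A^2+B^2))) / (sqrt ((A + 0*ea)^2 + (B + 0*eb)^2) * sqrt ((A + 0*ea)^2 + (B + 0*eb)^2))
     = - M * (A*ea + B*eb) / sqrt (A^2+B^2)^3"
    unfolding mult_zero_left add_0_right by (rule e[OF s])
  show ?thesis by (rule DERIV_cong[OF D eq])
qed

lemma d2:
  fixes A B ea eb M X e :: real
  assumes "A^2 + B^2 > 0"
  shows "((\<lambda>t. M * (X + t*e) / sqrt ((A + t*ea)^2 + (B + t*eb)^2)^3) has_real_derivative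
          M * (e / sqrt (A^2+B^2)^3 - 3 * X * (A*ea + B*eb) / sqrt (A^2+B^2)^5)) (at 0)"
proof -
  have s: "sqrt (A^2+B^2) \<noteq> 0" using real_sqrt_gt_zero[OF assms] by linarith
  have nz: "A = 0 \<longrightarrow> B \<noteq> 0" using assms by (cases "A = 0"; cases "B = 0") auto
  have p: "((\<lambda>t. sqrt ((A + t*ea)^2 + (B + t*eb)^2)^3) has_real_derivative
      of_nat 3 * ((A*ea+B*eb) / sqrt (A^2+B^2) * sqrt ((A + 0*ea)^2 + (B + 0*eb)^2)^(3 - Suc 0))) (at 0)"
    by (rule DERIV_power[OF dsq[OF assms]])
  have l: "((\<lambda>t. M * (X + t*e)) has_real_derivative M * e) (at 0)"
    by (auto intro!: derivative_eq_intros)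
  have "((\<lambda>t. M * (X + t*e) / sqrt ((A + t*ea)^2 + (B + t*eb)^2)^3) has_real_derivative
     (M * e * sqrt ((A + 0*ea)^2 + (B + 0*eb)^2)^3 - M * (X + 0 * e) * (of_nat 3 * ((A*ea+B*eb) / sqrt (A^2+B^2) * sqrt ((A + 0*ea)^2 + (B + 0*eb)^2)^(3 - Suc 0)))) / (sqrt ((A + 0*ea)^2 + (B + 0*eb)^2)^3 * sqrt ((A + 0*ea)^2 + (B + 0*eb)^2)^3)) (at 0)"
    by (rule DERIV_divide[OF l p]) (simp; use nz in blast)
  moreover have e: "\<And>S. S \<noteq> 0 \<Longrightarrow> (M * e * S^3 - M * X * (of_nat 3 * ((A*ea+B*eb) / S * S^(3 - Suc 0)))) / (S^3 * S^3)
      = M * (e / S^3 - 3 * X * (A*ea + B*eb) / S^5)"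
    by (simp add: field_simps eval_nat_numeral)
  ultimately show ?thesis using e[OF s] by simp
qed


definition uu :: "nat \<Rightarrow> (nat \<Rightarrow> real) \<Rightarrow> nat \<Rightarrow> nat \<Rightarrow> real" where
  "uu n p a b = (p a - p b)^2 + (p (a+n) - p (b+n))^2"

definition dl :: "nat \<Rightarrow> nat \<Rightarrow> real" where "dl k x = (if x = k then 1 else 0)"

definition Gf :: "nat \<Rightarrow> real \<Rightarrow> nat \<Rightarrow> nat \<Rightarrow> (nat \<Rightarrow> real) \<Rightarrow> real" where
  "Gf n m i s p = (\<Sum>b\<in>{..<n}-{i}. -(m*m) * (p (i+s) - p (b+s)) / sqrt (uu n p i b)^3)"

lemma uu_sym: "uu n p a b = uu n p b a"
  by (simp add: uu_def power2_commute)

lemma sum_sym2: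
  fixes g :: "nat \<Rightarrow> nat \<Rightarrow> real"
  assumes "\<And>a b. g a b = g b a"
  shows "(\<Sum>a<n. \<Sum>b\<in>{..<n}-{a}. g a b) = 2 * (\<Sum>a<n. \<Sum>b\<in>{a<..<n}. g a b)"
proof -
  have split: "\<And>a. a < n \<Longrightarrow> (\<Sum>b\<in>{..<n}-{a}. g a b) = (\<Sum>b\<in>{a<..<n}. g a b) + (\<Sum>b\<in>{..<a}. g a b)"
  proof -
    fix a assume "a < n"
    have "{..<n}-{a} = {a<..<n} \<union> {..<a}" using \<open>a<n\<close> by auto
    then have "(\<Sum>b\<in>{..<n}-{a}. g a b) = (\<Sum>b\<in>{a<..<n} \<union> {..<a}. g a b)" by simp
    also have "\<dots> = (\<Sum>b\<in>{a<..<n}. g a b) + (\<Sum>b\<in>{..<a}. g a b)"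
      by (rule sum.union_disjoint) auto
    finally show "(\<Sum>b\<in>{..<n}-{a}. g a b) = (\<Sum>b\<in>{a<..<n}. g a b) + (\<Sum>b\<in>{..<a}. g a b)" .
  qed
  have sw: "(\<Sum>a<n. \<Sum>b\<in>{..<a}. g a b) = (\<Sum>a<n. \<Sum>b\<in>{a<..<n}. g a b)"
  proof -
    have "(\<Sum>a<n. \<Sum>b\<in>{..<a}. g a b) = (\<Sum>a<n. \<Sum>b\<in>{y. y\<in>{..<n} \<and> y < a}. g a b)"
      by (rule sum.cong) (auto intro!: sum.cong)
    also have "\<dots> = (\<Sum>b<n. \<Sum>a\<in>{x. x\<in>{..<n} \<and> b < x}. g a b)"
      by (rule sum.swap_restrict) auto
    also have "\<dots> = (\<Sum>a<n. \<Sum>b\<in>{a<..<n}. g a b)"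
      by (rule sum.cong) (auto intro!: sum.cong simp: assms)
    finally show ?thesis .
  qed
  show ?thesis using split sw by (simp add: sum.distrib)
qed

lemma V_sym: "nbody_V n m p = (1/2) * (\<Sum>a<n. \<Sum>b\<in>{..<n}-{a}. m*m / sqrt (uu n p a b))"
  by (subst sum_sym2) (auto simp: nbody_V_def uu_def uu_sym[unfolded uu_def])

lemma uu_upd: "uu n (p(k := p k + t)) a b =
   (p a - p b + t * (dl k a - dl k b))^2 + (p (a+n) - p (b+n) + t * (dl k (a+n) - dl k (b+n)))^2"
  unfolding uu_def dl_def by (auto simp: algebra_simps power2_eq_square)

lemma dsum1:
  fixes F :: "nat \<Rightarrow> nat \<Rightarrow> real"
  assumes "i < n" and anti: "\<And>a b. F a b = - F b a"
  shows "(\<Sum>a<n. \<Sum>b\<in>{..<n}-{a}. (dl i a - dl i b) * F a b) = 2 * (\<Sum>b\<in>{..<n}-{i}. F i b)"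
proof -
  have 1: "(\<Sum>a<n. \<Sum>b\<in>{..<n}-{a}. dl i a * F a b) = (\<Sum>b\<in>{..<n}-{i}. F i b)"
  proof -
    have "(\<Sum>a<n. \<Sum>b\<in>{..<n}-{a}. dl i a * F a b) = (\<Sum>a<n. if a = i then (\<Sum>b\<in>{..<n}-{a}. F a b) else 0)"
      by (rule sum.cong) (auto simp: dl_def)
    also have "\<dots> = (\<Sum>b\<in>{..<n}-{i}. F i b)"
      using assms(1) by (subst sum.delta) auto
    finally show ?thesis .
  qed
  have 2: "(\<Sum>a<n. \<Sum>b\<in>{..<n}-{a}. dl i b * F a b) = (\<Sum>a\<in>{..<n}-{i}. F a i)"
  proof -
    have "(\<Sum>a<n. \<Sum>b\<in>{..<n}-{a}. dl i b * F a b) = (\<Sum>a<n. \<Sum>b\<in>{..<n}-{a}. if b = i then F a b else 0)"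
      by (intro sum.cong refl) (simp add: dl_def)
    also have "\<dots> = (\<Sum>a<n. if i \<in> {..<n}-{a} then F a i else 0)"
      by (rule sum.cong) (auto simp: sum.delta)
    also have "\<dots> = (\<Sum>a<n. if a \<noteq> i then F a i else 0)"
      using assms(1) by (intro sum.cong) auto
    also have "\<dots> = (\<Sum>a\<in>{..<n}-{i}. F a i)"
      by (subst sum.remove[of _ i]) (use assms(1) in \<open>auto intro!: sum.cong\<close>)
    finally show ?thesis .
  qed
  have "(\<Sum>a<n. \<Sum>b\<in>{..<n}-{a}. (dl i a - dl i b) * F a b)
      = (\<Sum>a<n. \<Sum>b\<in>{..<n}-{a}. dl i a * F a b) - (\<Sum>a<n. \<Sum>b\<in>{..<n}-{a}. dl i b * F a b)"
    by (simp add: left_diff_distrib sum_subtractf)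
  also have "\<dots> = (\<Sum>b\<in>{..<n}-{i}. F i b) + (\<Sum>a\<in>{..<n}-{i}. F i a)"
    unfolding 1 2 by (subst anti) (simp add: sum_negf)
  finally show ?thesis by simp
qed

lemma pdiff1:
  assumes pos: "\<forall>a<n. \<forall>b<n. a \<noteq> b \<longrightarrow> uu n p a b > 0" and i: "i < n" and s: "s = 0 \<or> s = n"
  shows "pdiff (i+s) (nbody_V n m) p = Gf n m i s p"
proof -
  define k where "k = i + s"
  have eq: "(\<lambda>t. nbody_V n m (p(k := p k + t))) = (\<lambda>t. (1/2) * (\<Sum>a<n. \<Sum>b\<in>{..<n}-{a}. m*m / sqrt ((p a - p b + t * (dl k a - dl k b))^2 + (p (a+n) - p (b+n) + t * (dl k (a+n) - dl k (b+n)))^2)))"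
    by (simp add: V_sym uu_upd)
  have T: "\<And>a b. a \<in> {..<n} \<Longrightarrow> b \<in> {..<n}-{a} \<Longrightarrow> ((\<lambda>t. m*m / sqrt ((p a - p b + t * (dl k a - dl k b))^2 + (p (a+n) - p (b+n) + t * (dl k (a+n) - dl k (b+n)))^2))
      has_real_derivative (- (m*m) * ((p a - p b)*(dl k a - dl k b) + (p(a+n) - p(b+n))*(dl k (a+n) - dl k (b+n))) / sqrt ((p a - p b)^2 + (p (a+n) - p (b+n))^2)^3)) (at 0)"
    by (rule d1) (use pos in \<open>auto simp: uu_def\<close>)
  have D: "((\<lambda>t. nbody_V n m (p(k := p k + t))) has_real_derivative
      (1/2) * (\<Sum>a<n. \<Sum>b\<in>{..<n}-{a}. - (m*m) * ((p a - p b)*(dl k a - dl k b) + (p(a+n) - p(b+n))*(dl k (a+n) - dl k (b+n))) / sqrt ((p a - p b)^2 + (p (a+n) - p (b+n))^2)^3)) (at 0)"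
    unfolding eq by (intro DERIV_cmult DERIV_sum T)
  have tm: "\<And>a b. a < n \<Longrightarrow> b < n \<Longrightarrow> - (m*m) * ((p a - p b)*(dl k a - dl k b) + (p(a+n) - p(b+n))*(dl k (a+n) - dl k (b+n))) / sqrt ((p a - p b)^2 + (p (a+n) - p (b+n))^2)^3
      = (dl i a - dl i b) * (-(m*m) * (p (a+s) - p (b+s)) / sqrt (uu n p a b)^3)"
    using s i unfolding k_def uu_def by (auto simp: dl_def)
  have "pdiff (i+s) (nbody_V n m) p = (1/2) * (\<Sum>a<n. \<Sum>b\<in>{..<n}-{a}. - (m*m) * ((p a - p b)*(dl k a - dl k b) + (p(a+n) - p(b+n))*(dl k (a+n) - dl k (b+n))) / sqrt ((p a - p b)^2 + (p (a+n) - p (b+n))^2)^3)"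
    unfolding pdiff_def k_def[symmetric] by (rule DERIV_imp_deriv[OF D])
  also have "\<dots> = (1/2) * (\<Sum>a<n. \<Sum>b\<in>{..<n}-{a}. (dl i a - dl i b) * (-(m*m) * (p (a+s) - p (b+s)) / sqrt (uu n p a b)^3))"
    by (intro arg_cong[where f="\<lambda>x. (1/2) * x"] sum.cong refl tm) auto
  also have "\<dots> = (1/2) * (2 * (\<Sum>b\<in>{..<n}-{i}. -(m*m) * (p (i+s) - p (b+s)) / sqrt (uu n p i b)^3))"
  proof (subst dsum1[OF i])
    fix a b
    show "-(m*m) * (p (a+s) - p (b+s)) / sqrt (uu n p a b)^3 = - (-(m*m) * (p (b+s) - p (a+s)) / sqrt (uu n p b a)^3)"
      by (simp add: uu_sym[of n p b a] diff_divide_distrib algebra_simps)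
  qed (rule refl)
  also have "\<dots> = Gf n m i s p"
    unfolding Gf_def by simp
  finally show ?thesis .
qed



definition Ef :: "nat \<Rightarrow> real \<Rightarrow> (nat \<Rightarrow> real) \<Rightarrow> nat \<Rightarrow> nat \<Rightarrow> nat \<Rightarrow> nat \<Rightarrow> real" where
  "Ef n m c j b s \<sigma> = -(m*m) * ((if s = \<sigma> then 1 else 0) / sqrt (uu n c j b)^3
      - 3 * (c (j+s) - c (b+s)) * (c (j+\<sigma>) - c (b+\<sigma>)) / sqrt (uu n c j b)^5)"

lemma upd_val: "(p(k := p k + t)) x = p x + t * dl k x"
  by (simp add: dl_def)

lemma alg1:
  fixes M d X Y R3 R5 e :: real
  shows "-M * ((e * d) / R3 - 3 * X * (d * Y) / R5) = d * (-M * (e / R3 - 3 * X * Y / R5))"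
  by (cases "R3 = 0"; cases "R5 = 0") (simp_all add: field_simps)

lemma isCont_nhds: "isCont f x \<Longrightarrow> (f \<longlongrightarrow> f x) (nhds x)"
  by (simp add: isCont_def tendsto_at_iff_tendsto_nhds)

lemma ev_pos:
  assumes pos: "\<forall>a<n. \<forall>b<n. a \<noteq> b \<longrightarrow> uu n c a b > 0"
  shows "eventually (\<lambda>t. \<forall>a<n. \<forall>b<n. a \<noteq> b \<longrightarrow> uu n (c(k := c k + t)) a b > 0) (nhds 0)"
proof -
  have each: "eventually (\<lambda>t. a \<noteq> b \<longrightarrow> uu n (c(k := c k + t)) a b > 0) (nhds 0)" if ab: "a < n" "b < n" for a b
  proof (cases "a = b")
    case True then show ?thesis by simp
  next
    case False
    have cont: "isCont (\<lambda>t. uu n (c(k := c k + t)) a b) 0"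
      unfolding uu_upd by (intro continuous_intros)
    have "((\<lambda>t. uu n (c(k := c k + t)) a b) \<longlongrightarrow> uu n (c(k := c k + 0)) a b) (nhds 0)"
      by (rule isCont_nhds[OF cont])
    then have "((\<lambda>t. uu n (c(k := c k + t)) a b) \<longlongrightarrow> uu n c a b) (nhds 0)" by simp
    from order_tendstoD(1)[OF this] have "eventually (\<lambda>t. uu n (c(k := c k + t)) a b > 0) (nhds 0)"
      using pos ab False by auto
    then show ?thesis by (rule eventually_mono) simp
  qed
  have "eventually (\<lambda>t. \<forall>a\<in>{..<n}. \<forall>b\<in>{..<n}. a \<noteq> b \<longrightarrow> uu n (c(k := c k + t)) a b > 0) (nhds 0)"
  proof (rule eventually_ball_finite)
    show "\<forall>a\<in>{..<n}. \<forall>\<^sub>F t in nhds 0. \<forall>b\<in>{..<n}. a \<noteq> b \<longrightarrow> 0 < uu n (c(k := c k + t)) a b"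
    proof
      fix a assume a: "a \<in> {..<n}"
      show "\<forall>\<^sub>F t in nhds 0. \<forall>b\<in>{..<n}. a \<noteq> b \<longrightarrow> 0 < uu n (c(k := c k + t)) a b"
        by (rule eventually_ball_finite) (use a each in auto)
    qed
  qed auto
  then show ?thesis by (rule eventually_mono) auto
qed

lemma pdiff2:
  assumes pos: "\<forall>a<n. \<forall>b<n. a \<noteq> b \<longrightarrow> uu n c a b > 0" and i: "i < n" and sg: "\<sigma> = 0 \<or> \<sigma> = n"
    and j: "j < n" and s: "s = 0 \<or> s = n"
  shows "pdiff (i+\<sigma>) (\<lambda>p. pdiff (j+s) (nbody_V n m) p) c = (\<Sum>b\<in>{..<n}-{j}. (dl i j - dl i b) * Ef n m c j b s \<sigma>)"
proof -
  define k where "k = i + \<sigma>"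
  have ev: "eventually (\<lambda>t. pdiff (j+s) (nbody_V n m) (c(k := c k + t)) = Gf n m j s (c(k := c k + t))) (nhds 0)"
    using ev_pos[OF pos, of k] by (rule eventually_mono) (rule pdiff1[OF _ j s])
  have Geq: "(\<lambda>t. Gf n m j s (c(k := c k + t))) = (\<lambda>t. \<Sum>b\<in>{..<n}-{j}. -(m*m) * ((c (j+s) - c (b+s)) + t * (dl k (j+s) - dl k (b+s)))
      / sqrt ((c j - c b + t * (dl k j - dl k b))^2 + (c (j+n) - c (b+n) + t * (dl k (j+n) - dl k (b+n)))^2)^3)"
    unfolding Gf_def uu_upd upd_val by (intro ext sum.cong refl) (simp add: algebra_simps)
  have D: "((\<lambda>t. \<Sum>b\<in>{..<n}-{j}. -(m*m) * ((c (j+s) - c (b+s)) + t * (dl k (j+s) - dl k (b+s)))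
      / sqrt ((c j - c b + t * (dl k j - dl k b))^2 + (c (j+n) - c (b+n) + t * (dl k (j+n) - dl k (b+n)))^2)^3)
     has_real_derivative (\<Sum>b\<in>{..<n}-{j}. -(m*m) * ((dl k (j+s) - dl k (b+s)) / sqrt ((c j - c b)^2 + (c (j+n) - c (b+n))^2)^3
       - 3 * (c (j+s) - c (b+s)) * ((c j - c b) * (dl k j - dl k b) + (c (j+n) - c (b+n)) * (dl k (j+n) - dl k (b+n)))
         / sqrt ((c j - c b)^2 + (c (j+n) - c (b+n))^2)^5))) (at 0)"
    by (intro DERIV_sum d2) (use pos j in \<open>auto simp: uu_def\<close>)
  have f1: "dl k (j+s) - dl k (b+s) = (if s = \<sigma> then 1 else 0) * (dl i j - dl i b)" if "b < n" for b
    using sg s i j that unfolding k_def dl_def by auto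
  have f2: "(c j - c b) * (dl k j - dl k b) + (c (j+n) - c (b+n)) * (dl k (j+n) - dl k (b+n))
      = (dl i j - dl i b) * (c (j+\<sigma>) - c (b+\<sigma>))" if "b < n" for b
    using sg s i j that unfolding k_def dl_def by auto
  have "pdiff (i+\<sigma>) (\<lambda>p. pdiff (j+s) (nbody_V n m) p) c = deriv (\<lambda>t. pdiff (j+s) (nbody_V n m) (c(k := c k + t))) 0"
    unfolding pdiff_def k_def ..
  also have "\<dots> = deriv (\<lambda>t. Gf n m j s (c(k := c k + t))) 0"
    by (rule deriv_cong_ev[OF ev refl])
  also have "\<dots> = (\<Sum>b\<in>{..<n}-{j}. -(m*m) * ((dl k (j+s) - dl k (b+s)) / sqrt ((c j - c b)^2 + (c (j+n) - c (b+n))^2)^3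
       - 3 * (c (j+s) - c (b+s)) * ((c j - c b) * (dl k j - dl k b) + (c (j+n) - c (b+n)) * (dl k (j+n) - dl k (b+n)))
         / sqrt ((c j - c b)^2 + (c (j+n) - c (b+n))^2)^5))"
    unfolding Geq by (rule DERIV_imp_deriv[OF D])
  also have "\<dots> = (\<Sum>b\<in>{..<n}-{j}. (dl i j - dl i b) * Ef n m c j b s \<sigma>)"
  proof (intro sum.cong refl)
    fix b assume "b \<in> {..<n}-{j}"
    then have b: "b < n" by auto
    show "-(m*m) * ((dl k (j+s) - dl k (b+s)) / sqrt ((c j - c b)^2 + (c (j+n) - c (b+n))^2)^3
       - 3 * (c (j+s) - c (b+s)) * ((c j - c b) * (dl k j - dl k b) + (c (j+n) - c (b+n)) * (dl k (j+n) - dl k (b+n)))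
         / sqrt ((c j - c b)^2 + (c (j+n) - c (b+n))^2)^5) = (dl i j - dl i b) * Ef n m c j b s \<sigma>"
      unfolding f1[OF b] f2[OF b] Ef_def uu_def by (rule alg1)
  qed
  finally show ?thesis .
qed



lemma dpart1:
  fixes F :: "nat \<Rightarrow> nat \<Rightarrow> real"
  assumes "i < n"
  shows "(\<Sum>a<n. \<Sum>b\<in>{..<n}-{a}. dl i a * F a b) = (\<Sum>b\<in>{..<n}-{i}. F i b)"
proof -
  have "(\<Sum>a<n. \<Sum>b\<in>{..<n}-{a}. dl i a * F a b) = (\<Sum>a<n. if a = i then (\<Sum>b\<in>{..<n}-{a}. F a b) else 0)"
    by (rule sum.cong) (auto simp: dl_def)
  also have "\<dots> = (\<Sum>b\<in>{..<n}-{i}. F i b)"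
    using assms(1) by (subst sum.delta) auto
  finally show ?thesis .
qed

lemma dpart2:
  fixes F :: "nat \<Rightarrow> nat \<Rightarrow> real"
  assumes "i < n"
  shows "(\<Sum>a<n. \<Sum>b\<in>{..<n}-{a}. dl i b * F a b) = (\<Sum>a\<in>{..<n}-{i}. F a i)"
proof -
  have "(\<Sum>a<n. \<Sum>b\<in>{..<n}-{a}. dl i b * F a b) = (\<Sum>a<n. \<Sum>b\<in>{..<n}-{a}. if b = i then F a b else 0)"
    by (intro sum.cong refl) (simp add: dl_def)
  also have "\<dots> = (\<Sum>a<n. if i \<in> {..<n}-{a} then F a i else 0)"
    by (rule sum.cong) (auto simp: sum.delta)
  also have "\<dots> = (\<Sum>a<n. if a \<noteq> i then F a i else 0)"
    using assms(1) by (intro sum.cong) auto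
  also have "\<dots> = (\<Sum>a\<in>{..<n}-{i}. F a i)"
    by (subst sum.remove[of _ i]) (use assms(1) in \<open>auto intro!: sum.cong\<close>)
  finally show ?thesis .
qed

lemma dsum2:
  fixes E :: "nat \<Rightarrow> nat \<Rightarrow> real" and g :: "nat \<Rightarrow> real"
  assumes i: "i < n" and sym: "\<And>a b. E a b = E b a"
  shows "(\<Sum>j<n. g j * (\<Sum>b\<in>{..<n}-{j}. (dl i j - dl i b) * E j b)) = (\<Sum>b\<in>{..<n}-{i}. (g i - g b) * E i b)"
proof -
  have "(\<Sum>j<n. g j * (\<Sum>b\<in>{..<n}-{j}. (dl i j - dl i b) * E j b))
      = (\<Sum>j<n. \<Sum>b\<in>{..<n}-{j}. dl i j * (g j * E j b)) - (\<Sum>j<n. \<Sum>b\<in>{..<n}-{j}. dl i b * (g j * E j b))"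
    by (simp add: sum_distrib_left left_diff_distrib sum_subtractf algebra_simps)
  also have "\<dots> = (\<Sum>b\<in>{..<n}-{i}. g i * E i b) - (\<Sum>j\<in>{..<n}-{i}. g j * E j i)"
    unfolding dpart1[OF i] dpart2[OF i] ..
  also have "\<dots> = (\<Sum>b\<in>{..<n}-{i}. (g i - g b) * E i b)"
    by (simp add: sum_subtractf left_diff_distrib sym[of _ i])
  finally show ?thesis .
qed

lemma sum_split2: "sum f {..<(n::nat)+k} = sum f {..<n} + (\<Sum>j<k. f (n+j))"
  by (induct k) (simp_all add: lessThan_Suc add_ac)

lemma Ef_sym: "Ef n m c a b s \<sigma> = Ef n m c b a s \<sigma>"
  unfolding Ef_def by (simp add: uu_sym[of n c b a] algebra_simps)

lemma Wv_general:
  assumes pos: "\<forall>a<n. \<forall>b<n. a \<noteq> b \<longrightarrow> uu n c a b > 0" and i: "i < n" and sg: "\<sigma> = 0 \<or> \<sigma> = n"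
  shows "matvec (2*n) (Wmat n m c) v (i+\<sigma>) = (1/m) * (\<Sum>b\<in>{..<n}-{i}.
      (v i - v b) * Ef n m c i b 0 \<sigma> + (v (i+n) - v (b+n)) * Ef n m c i b n \<sigma>)"
proof -
  have W: "Wmat n m c (i+\<sigma>) (j+s) = (1/m) * (\<Sum>b\<in>{..<n}-{j}. (dl i j - dl i b) * Ef n m c j b s \<sigma>)"
    if "j < n" "s = 0 \<or> s = n" for j s
    unfolding Wmat_def using pdiff2[OF pos i sg that] by simp
  have "matvec (2*n) (Wmat n m c) v (i+\<sigma>) = (\<Sum>j<n. Wmat n m c (i+\<sigma>) j * v j) + (\<Sum>j<n. Wmat n m c (i+\<sigma>) (n+j) * v (n+j))"
    unfolding matvec_def mult_2 sum_split2 ..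
  also have "\<dots> = (1/m) * ((\<Sum>j<n. v j * (\<Sum>b\<in>{..<n}-{j}. (dl i j - dl i b) * Ef n m c j b 0 \<sigma>))
      + (\<Sum>j<n. v (j+n) * (\<Sum>b\<in>{..<n}-{j}. (dl i j - dl i b) * Ef n m c j b n \<sigma>)))"
    using W[of _ 0] W[of _ n] by (simp add: sum_distrib_left distrib_left algebra_simps)
  also have "\<dots> = (1/m) * ((\<Sum>b\<in>{..<n}-{i}. (v i - v b) * Ef n m c i b 0 \<sigma>) + (\<Sum>b\<in>{..<n}-{i}. (v (i+n) - v (b+n)) * Ef n m c i b n \<sigma>))"
    by (subst dsum2[OF i Ef_sym], subst dsum2[OF i Ef_sym], rule refl)
  also have "\<dots> = (1/m) * (\<Sum>b\<in>{..<n}-{i}. (v i - v b) * Ef n m c i b 0 \<sigma> + (v (i+n) - v (b+n)) * Ef n m c i b n \<sigma>)"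
    by (simp add: sum.distrib)
  finally show ?thesis .
qed




lemma refl_zero:
  fixes h :: "nat \<Rightarrow> real"
  assumes "\<And>k. 1 \<le> k \<Longrightarrow> k \<le> n - 1 \<Longrightarrow> h (n - k) = - h k"
  shows "(\<Sum>k=1..n-1. h k) = 0"
proof (cases "n = 0")
  case True then show ?thesis by simp
next
  case False
  have "(\<Sum>k=1..n-1. h k) = (\<Sum>k=1..n-1. h (n - 1 + 1 - k))"
    by (rule sum.atLeastAtMost_rev)
  also have "\<dots> = (\<Sum>k=1..n-1. - h k)"
    using False by (intro sum.cong refl) (auto simp: assms)
  also have "\<dots> = - (\<Sum>k=1..n-1. h k)" by (simp add: sum_negf)
  finally show ?thesis by simp
qed

lemma tel:
  fixes x :: real
  shows "2 * sin (x/2) * (\<Sum>k=1..N. sin (real k * x)) = cos (x/2) - cos ((real N + 1/2) * x)"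
proof (induct N)
  case 0 then show ?case by simp
next
  case (Suc N)
  have step: "2 * sin (x/2) * sin (real (Suc N) * x) = cos ((real N + 1/2) * x) - cos ((real (Suc N) + 1/2) * x)"
  proof -
    have a: "(real N + 1/2) * x = real (Suc N) * x - x/2" by (simp add: algebra_simps)
    have b: "(real (Suc N) + 1/2) * x = real (Suc N) * x + x/2" by (simp add: algebra_simps)
    show ?thesis unfolding a b cos_diff cos_add by (simp add: algebra_simps)
  qed
  have "2 * sin (x/2) * (\<Sum>k=1..Suc N. sin (real k * x)) = 2 * sin (x/2) * (\<Sum>k=1..N. sin (real k * x)) + 2 * sin (x/2) * sin (real (Suc N) * x)"
    by (simp add: algebra_simps)
  then show ?case using Suc step by simp
qed

lemma T_sum:
  assumes n: "n \<ge> 2"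
  shows "(\<Sum>k=1..n-1. sin (pi * real k / real n)) = sin (pi / real n) / (1 - cos (pi / real n))"
proof -
  define x where "x = pi / real n"
  have xpos: "0 < x" "x < pi" using n by (auto simp: x_def field_simps)
  have s2: "sin (x/2) > 0" using xpos by (intro sin_gt_zero) auto
  have e: "(\<Sum>k=1..n-1. sin (pi * real k / real n)) = (\<Sum>k=1..n-1. sin (real k * x))"
    by (simp add: x_def algebra_simps)
  have "(real (n-1) + 1/2) * x = pi - x/2" using n by (simp add: x_def of_nat_diff field_simps)
  then have "2 * sin (x/2) * (\<Sum>k=1..n-1. sin (real k * x)) = 2 * cos (x/2)"
    using tel[of x "n-1"] by simp
  then have T: "(\<Sum>k=1..n-1. sin (real k * x)) = cos (x/2) / sin (x/2)"
    using s2 by (simp add: field_simps)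
  have "sin x / (1 - cos x) = cos (x/2) / sin (x/2)"
  proof -
    have sx: "sin x = 2 * sin (x/2) * cos (x/2)" using sin_double[of "x/2"] by simp
    have cx: "cos x = 1 - 2 * sin (x/2)^2" using cos_double_sin[of "x/2"] by simp
    show ?thesis unfolding sx cx using s2 by (simp add: field_simps power2_eq_square)
  qed
  then show ?thesis using e T by (simp add: x_def)
qed

lemma sin_pos_k:
  assumes "0 < k" "k < n"
  shows "sin (pi * real k / real n) > 0"
  using assms by (intro sin_gt_zero) (auto simp: field_simps)

lemma ts1_term:
  fixes x :: real
  assumes "sin x \<noteq> 0"
  shows "(1 - cos (4*x)) / sin x ^ 3 = 8 * (1 / sin x - sin x)"
proof -
  have c4: "cos (4*x) = 1 - 8 * sin x ^ 2 * (1 - sin x ^ 2)"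
  proof -
    have "cos (4*x) = 1 - 2 * sin (2*x) ^ 2" using cos_double_sin[of "2*x"] by simp
    also have "\<dots> = 1 - 8 * sin x ^ 2 * cos x ^ 2" by (simp add: sin_double power_mult_distrib)
    also have "\<dots> = 1 - 8 * sin x ^ 2 * (1 - sin x ^ 2)" by (simp add: cos_squared_eq)
    finally show ?thesis .
  qed
  show ?thesis unfolding c4 using assms by (simp add: field_simps power2_eq_square power3_eq_cube)
qed

lemma sin4_refl: "sin (4 * (pi - x)) = - sin (4 * x)"
proof -
  have "4 * (pi - x) = (- (4*x) + 2*pi) + 2*pi" by (simp add: algebra_simps)
  then show ?thesis by (simp only: sin_periodic sin_minus)
qed

lemma sin2_refl: "sin (2 * (pi - x)) = - sin (2 * x)"
proof -
  have "2 * (pi - x) = - (2*x) + 2*pi" by (simp add: algebra_simps)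
  then show ?thesis by (simp only: sin_periodic sin_minus)
qed

lemma sin_ne_k: "k \<in> {1..n-1} \<Longrightarrow> sin (pi * real k / real n) \<noteq> 0"
  using sin_pos_k[of k n] by force

lemma ts_zero:
  assumes n: "n \<ge> 2"
  shows "(\<Sum>k=1..n-1. sin (4 * (pi * real k / real n)) / sin (pi * real k / real n) ^ 3) = 0"
    "(\<Sum>k=1..n-1. sin (2 * (pi * real k / real n)) / sin (pi * real k / real n) ^ 3) = 0"
proof -
  have x: "pi * real (n - k) / real n = pi - pi * real k / real n" if "k \<le> n - 1" for k
    using that n by (simp add: of_nat_diff field_simps)
  show "(\<Sum>k=1..n-1. sin (4 * (pi * real k / real n)) / sin (pi * real k / real n) ^ 3) = 0"
  proof (rule refl_zero)
    fix k assume k: "1 \<le> k" "k \<le> n - 1"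
    show "sin (4 * (pi * real (n - k) / real n)) / sin (pi * real (n - k) / real n) ^ 3 = - (sin (4 * (pi * real k / real n)) / sin (pi * real k / real n) ^ 3)"
      unfolding x[OF k(2)] sin4_refl sin_pi_minus by simp
  qed
  show "(\<Sum>k=1..n-1. sin (2 * (pi * real k / real n)) / sin (pi * real k / real n) ^ 3) = 0"
  proof (rule refl_zero)
    fix k assume k: "1 \<le> k" "k \<le> n - 1"
    show "sin (2 * (pi * real (n - k) / real n)) / sin (pi * real (n - k) / real n) ^ 3 = - (sin (2 * (pi * real k / real n)) / sin (pi * real k / real n) ^ 3)"
      unfolding x[OF k(2)] sin2_refl sin_pi_minus by simp
  qed
qed

lemma ts1:
  assumes n: "n \<ge> 2"
  shows "(\<Sum>k=1..n-1. (1 - cos (4 * (pi * real k / real n))) / sin (pi * real k / real n) ^ 3)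
     = 8 * ((\<Sum>k=1..n-1. 1 / sin (pi * real k / real n)) - sin (pi / real n) / (1 - cos (pi / real n)))"
proof -
  have "(\<Sum>k=1..n-1. (1 - cos (4 * (pi * real k / real n))) / sin (pi * real k / real n) ^ 3)
      = (\<Sum>k=1..n-1. 8 * (1 / sin (pi * real k / real n) - sin (pi * real k / real n)))"
    by (intro sum.cong refl ts1_term) (rule sin_ne_k)
  also have "\<dots> = 8 * ((\<Sum>k=1..n-1. 1 / sin (pi * real k / real n)) - (\<Sum>k=1..n-1. sin (pi * real k / real n)))"
    by (simp add: sum_distrib_left sum_subtractf)
  finally show ?thesis using T_sum[OF n] by simp
qed



lemma modn: "a < 2*n \<Longrightarrow> a mod (n::nat) = (if a < n then a else a - n)"
  by (simp add: mod_if)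

lemma reindex:
  fixes h :: "real \<Rightarrow> real"
  assumes per: "\<And>x. h (x + 2*pi) = h x" and i: "i < n"
  shows "(\<Sum>b\<in>{..<n}-{i}. h (2*pi*real b/real n)) = (\<Sum>k=1..n-1. h (2*pi*real i/real n + 2*pi*real k/real n))"
proof -
  have npos: "real n > 0" using i by simp
  show ?thesis
proof (rule sum.reindex_bij_witness[where i="\<lambda>k. (i+k) mod n" and j="\<lambda>b. (b + n - i) mod n"])
  fix b assume b: "b \<in> {..<n}-{i}"
  show "(i + (b + n - i) mod n) mod n = b" using b i by (auto simp: modn)
  show "(b + n - i) mod n \<in> {1..n-1}" using b i by (auto simp: modn)
  show "h (2*pi*real i/real n + 2*pi*real ((b + n - i) mod n)/real n) = h (2*pi*real b/real n)"
  proof (cases "i < b")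
    case True
    then have "(b + n - i) mod n = b - i" using b by (auto simp: modn)
    moreover have "2*pi*real i/real n + 2*pi*real (b - i)/real n = 2*pi*real b/real n"
      using True npos by (simp add: of_nat_diff field_simps)
    ultimately show ?thesis by simp
  next
    case False
    then have bi: "b < i" using b by auto
    then have "(b + n - i) mod n = b + n - i" using b i by (auto simp: modn)
    moreover have "2*pi*real i/real n + 2*pi*real (b + n - i)/real n = 2*pi*real b/real n + 2*pi"
      using bi i npos by (simp add: of_nat_diff field_simps)
    ultimately show ?thesis by (simp add: per)
  qed
next
  fix k assume k: "k \<in> {1..n-1}"
  show "((i+k) mod n + n - i) mod n = k" using k i by (auto simp: modn)
  show "(i+k) mod n \<in> {..<n}-{i}" using k i by (auto simp: modn split: if_splits)
qed
qed



definition ff :: "real \<Rightarrow> real \<Rightarrow> real \<Rightarrow> real" where "ff A B y = A * cos (2*y) - B * sin (2*y)"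
definition gg :: "real \<Rightarrow> real \<Rightarrow> real \<Rightarrow> real" where "gg A B y = A * sin (2*y) + B * cos (2*y)"
definition F0 :: "real \<Rightarrow> real \<Rightarrow> real \<Rightarrow> real \<Rightarrow> real \<Rightarrow> real" where
  "F0 al A B th ph = ((ff A B th - ff A B ph)/2 - 3 * B * sin (ph - th)) / (al * sqrt (2 - 2 * cos (ph - th)))^3"
definition F1 :: "real \<Rightarrow> real \<Rightarrow> real \<Rightarrow> real \<Rightarrow> real \<Rightarrow> real" where
  "F1 al A B th ph = ((gg A B th - gg A B ph)/2 - 3 * A * sin (ph - th)) / (al * sqrt (2 - 2 * cos (ph - th)))^3"

lemma ff_per: "ff A B (x + 2*pi) = ff A B x" and gg_per: "gg A B (x + 2*pi) = gg A B x"
proof -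
  have e: "2 * (x + 2*pi) = (2*x + 2*pi) + 2*pi" by (simp add: algebra_simps)
  show "ff A B (x + 2*pi) = ff A B x" unfolding ff_def e by (simp only: sin_periodic cos_periodic)
  show "gg A B (x + 2*pi) = gg A B x" unfolding gg_def e by (simp only: sin_periodic cos_periodic)
qed

lemma F0_per: "F0 al A B th (x + 2*pi) = F0 al A B th x" and F1_per: "F1 al A B th (x + 2*pi) = F1 al A B th x"
proof -
  have e: "x + 2*pi - th = (x - th) + 2*pi" by simp
  show "F0 al A B th (x + 2*pi) = F0 al A B th x" unfolding F0_def e ff_per by (simp only: sin_periodic cos_periodic)
  show "F1 al A B th (x + 2*pi) = F1 al A B th x" unfolding F1_def e gg_per by (simp only: sin_periodic cos_periodic)
qed

lemma sqrt_2x: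
  assumes "sin x > 0"
  shows "sqrt (2 - 2 * cos (2*x)) = 2 * sin x"
proof -
  have "2 - 2 * cos (2*x) = (2 * sin x)^2" using cos_double_sin[of x] by (simp add: power_mult_distrib)
  then have "sqrt (2 - 2 * cos (2*x)) = \<bar>2 * sin x\<bar>" by (simp only: real_sqrt_abs)
  then show ?thesis using assms by simp
qed

lemma per_k:
  assumes s: "sin x > 0" and al: "al > 0"
  shows "F0 al A B th (th + 2*x) = (ff A B th * (1 - cos (4*x)) + gg A B th * sin (4*x) - 6 * B * sin (2*x)) / (16 * al^3 * sin x ^ 3)"
    "F1 al A B th (th + 2*x) = (gg A B th * (1 - cos (4*x)) - ff A B th * sin (4*x) - 6 * A * sin (2*x)) / (16 * al^3 * sin x ^ 3)"
proof -
  have d: "th + 2*x - th = 2*x" by simp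
  have e: "2 * (th + 2*x) = 2*th + 4*x" by simp
  have f: "ff A B (th + 2*x) = ff A B th * cos (4*x) - gg A B th * sin (4*x)"
    unfolding ff_def gg_def e cos_add sin_add by (simp add: algebra_simps)
  have g: "gg A B (th + 2*x) = gg A B th * cos (4*x) + ff A B th * sin (4*x)"
    unfolding ff_def gg_def e cos_add sin_add by (simp add: algebra_simps)
  have r: "(al * sqrt (2 - 2 * cos (2*x)))^3 = 8 * al^3 * sin x ^ 3"
    unfolding sqrt_2x[OF s] by (simp add: power_mult_distrib)
  have nz: "16 * al^3 * sin x ^ 3 \<noteq> 0" using s al by simp
  show "F0 al A B th (th + 2*x) = (ff A B th * (1 - cos (4*x)) + gg A B th * sin (4*x) - 6 * B * sin (2*x)) / (16 * al^3 * sin x ^ 3)"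
    unfolding F0_def d r f using nz by (simp add: field_simps)
  show "F1 al A B th (th + 2*x) = (gg A B th * (1 - cos (4*x)) - ff A B th * sin (4*x) - 6 * A * sin (2*x)) / (16 * al^3 * sin x ^ 3)"
    unfolding F1_def d r g using nz by (simp add: field_simps)
qed

lemma algE0:
  fixes R U X0 X1 w0 w1 M B zz :: real
  assumes "R^2 = U" "R \<noteq> 0" "2*X0*(X0*w0 + X1*w1) = U*(w0 - 2*B*zz)"
  shows "w0 * (-M * (1 / R^3 - 3*X0*X0/R^5)) + w1 * (-M * (0 / R^3 - 3*X1*X0/R^5)) = M*((w0/2 - 3*B*zz)/R^3)"
proof -
  have "w0 * (-M * (1 / R^3 - 3*X0*X0/R^5)) + w1 * (-M * (0 / R^3 - 3*X1*X0/R^5))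
      = M * (- w0 * R^2 + 3 * (X0*(X0*w0 + X1*w1))) / R^5"
    using assms(2) by (simp add: field_simps eval_nat_numeral)
  also have "3 * (X0*(X0*w0 + X1*w1)) = 3/2 * R^2 * (w0 - 2*B*zz)" using assms(1,3) by (simp add: algebra_simps)
  also have "M * (- w0 * R^2 + 3/2 * R^2 * (w0 - 2*B*zz)) / R^5 = M * (R^2 * (w0/2 - 3*B*zz)) / R^5"
    by (rule arg_cong[where f="\<lambda>x. M * x / R^5"]) (simp add: field_simps)
  also have "\<dots> = M*((w0/2 - 3*B*zz)/R^3)"
    using assms(2) by (simp add: field_simps eval_nat_numeral)
  finally show ?thesis .
qed

lemma algE1:
  fixes R U X0 X1 w0 w1 M A zz :: real
  assumes "R^2 = U" "R \<noteq> 0" "2*X1*(X0*w0 + X1*w1) = U*(w1 - 2*A*zz)"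
  shows "w0 * (-M * (0 / R^3 - 3*X0*X1/R^5)) + w1 * (-M * (1 / R^3 - 3*X1*X1/R^5)) = M*((w1/2 - 3*A*zz)/R^3)"
proof -
  have "w0 * (-M * (0 / R^3 - 3*X0*X1/R^5)) + w1 * (-M * (1 / R^3 - 3*X1*X1/R^5))
      = M * (- w1 * R^2 + 3 * (X1*(X0*w0 + X1*w1))) / R^5"
    using assms(2) by (simp add: field_simps eval_nat_numeral)
  also have "3 * (X1*(X0*w0 + X1*w1)) = 3/2 * R^2 * (w1 - 2*A*zz)" using assms(1,3) by (simp add: algebra_simps)
  also have "M * (- w1 * R^2 + 3/2 * R^2 * (w1 - 2*A*zz)) / R^5 = M * (R^2 * (w1/2 - 3*A*zz)) / R^5"
    by (rule arg_cong[where f="\<lambda>x. M * x / R^5"]) (simp add: field_simps)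
  also have "\<dots> = M*((w1/2 - 3*A*zz)/R^3)"
    using assms(2) by (simp add: field_simps eval_nat_numeral)
  finally show ?thesis .
qed


lemma idx':
  fixes al A B pc ps qc qs X0 X1 w0 w1 U zz :: real
  assumes "pc^2 + ps^2 = 1" "qc^2 + qs^2 = 1" "X0 = al*(pc - qc)" "X1 = al*(ps - qs)"
    "w0 = (A*(pc^2 - ps^2) - B*(2*ps*pc)) - (A*(qc^2 - qs^2) - B*(2*qs*qc))"
    "w1 = (A*(2*ps*pc) + B*(pc^2 - ps^2)) - (A*(2*qs*qc) + B*(qc^2-qs^2))"
    "zz = qs*pc - qc*ps" "U = X0^2 + X1^2"
  shows "2*X0*(X0*w0 + X1*w1) = U*(w0 - 2*B*zz)" "2*X1*(X0*w0 + X1*w1) = U*(w1 - 2*A*zz)"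
  using assms by algebra+

lemma circ:
  fixes al pc ps qc qs :: real
  assumes "pc^2 + ps^2 = 1" "qc^2 + qs^2 = 1"
  shows "(al*pc - al*qc)^2 + (al*ps - al*qs)^2 = al^2 * (2 - 2*(qc*pc + qs*ps))"
  using assms by algebra

lemma int_contra:
  fixes a b n :: nat and j :: int
  assumes "a < n" "b < n" "a \<noteq> b" "int b - int a = j * int n"
  shows False
proof -
  consider "j = 0" | "j \<ge> 1" | "j \<le> -1" by linarith
  then show False
  proof cases
    case 1 then show ?thesis using assms by simp
  next
    case 2
    then have "1 * int n \<le> j * int n" by (intro mult_right_mono) auto
    then show ?thesis using assms by linarith
  next
    case 3
    then have "j * int n \<le> (-1) * int n" by (intro mult_right_mono) auto
    then show ?thesis using assms by linarith
  qed
qed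

lemma ff_exp: "ff A B y = A*(cos y^2 - sin y^2) - B*(2 * sin y * cos y)"
  unfolding ff_def cos_double sin_double by (simp add: algebra_simps)
lemma gg_exp: "gg A B y = A*(2 * sin y * cos y) + B*(cos y^2 - sin y^2)"
  unfolding gg_def cos_double sin_double by (simp add: algebra_simps)

lemma Jmat_mv:
  assumes "k < 2*n"
  shows "matvec (2*n) (Jmat n) u k = (if k < n then - u (k+n) else u (k-n))"
proof -
  have "matvec (2*n) (Jmat n) u k = (\<Sum>l<2*n. if l = (if k < n then k+n else k-n) then (if k < n then - u l else u l) else 0)"
    unfolding matvec_def Jmat_def using assms by (intro sum.cong refl) auto
  also have "\<dots> = (if k < n then - u (k+n) else u (k-n))"
    using assms by (subst sum.delta) auto
  finally show ?thesis .
qed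

lemma Jinv_mv:
  assumes "k < 2*n"
  shows "matvec (2*n) (Jinv n) u k = (if k < n then u (k+n) else - u (k-n))"
proof -
  have "matvec (2*n) (Jinv n) u k = (\<Sum>l<2*n. if l = (if k < n then k+n else k-n) then (if k < n then u l else - u l) else 0)"
    unfolding matvec_def Jinv_def using assms by (intro sum.cong refl) auto
  also have "\<dots> = (if k < n then u (k+n) else - u (k-n))"
    using assms by (subst sum.delta) auto
  finally show ?thesis .
qed



lemma dar_alg:
  fixes M al s :: real
  assumes "s \<noteq> 0" "al \<noteq> 0"
  shows "-M * (al - al * (1 - 2 * s^2)) / (al * (2 * s))^3 = -M/(4*al^2) * (1/s)"
  using assms by (simp add: field_simps power3_eq_cube power2_eq_square)

lemma S_alg:
  fixes m al S :: real
  assumes "m > 0" "al > 0" "- m * al = -(m*m)/(4*al^2) * S"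
  shows "S = 4 * al^3 / m"
  using assms by (simp add: field_simps power2_eq_square power3_eq_cube)

lemma sum_lin:
  fixes a b c :: "nat \<Rightarrow> real"
  shows "(\<Sum>k\<in>K. C * (P * a k + Q * b k - W * c k)) = C * (P * sum a K + Q * sum b K - W * sum c K)"
  by (simp add: sum_distrib_left sum.distrib sum_subtractf algebra_simps)

lemma Wmain:
  fixes n :: nat and m al A B :: real and c v :: "nat \<Rightarrow> real"
  assumes n2: "n \<ge> 2" and m_pos: "m > 0" and al_pos: "al > 0"
    and c_def: "\<And>i. i < n \<Longrightarrow> c i = al * cos (2*pi*real i/real n) \<and> c (i+n) = al * sin (2*pi*real i/real n)"
    and darb: "darboux_point n m c"
    and v_def: "\<And>i. i < n \<Longrightarrow> v i = ff A B (2*pi*real i/real n) \<and> v (i+n) = gg A B (2*pi*real i/real n)"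
  shows "\<forall>k<2*n. matvec (2*n) (Wmat n m c) v k = (2 - (2 * sin (pi / real n) / (1 - cos (pi / real n)))
            * inverse (\<Sum>j=1..n-1. 1 / sin (pi * real j / real n))) * v k"
proof -
  define th where "th i = 2*pi*real i/real n" for i :: nat
  define S where "S = (\<Sum>j=1..n-1. 1 / sin (pi * real j / real n))"
  define T where "T = sin (pi / real n) / (1 - cos (pi / real n))"
  have n0: "n > 0" "n \<noteq> 0" using n2 by auto
  have cth: "c i = al * cos (th i)" "c (i+n) = al * sin (th i)" if "i < n" for i
    using c_def[OF that] by (auto simp: th_def)
  have vth: "v i = ff A B (th i)" "v (i+n) = gg A B (th i)" if "i < n" for i
    using v_def[OF that] by (auto simp: th_def)
  have uu_c: "uu n c a b = al^2 * (2 - 2 * cos (th b - th a))" if "a < n" "b < n" for a b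
    unfolding uu_def cth[OF that(1)] cth[OF that(2)] cos_diff
    by (rule circ) (simp_all add: add.commute)
  have sq_uu: "sqrt (uu n c a b) = al * sqrt (2 - 2 * cos (th b - th a))" if "a<n" "b<n" for a b
    unfolding uu_c[OF that] real_sqrt_mult using al_pos by simp
  have pos_c: "\<forall>a<n. \<forall>b<n. a \<noteq> b \<longrightarrow> uu n c a b > 0"
  proof (intro allI impI)
    fix a b assume ab: "a < n" "b < n" "a \<noteq> b"
    have "cos (th b - th a) \<noteq> 1"
    proof
      assume "cos (th b - th a) = 1"
      then obtain j :: int where j: "th b - th a = j * 2 * pi" by (auto simp: cos_one_2pi_int)
      define X where "X = (real b - real a) / real n"
      have "th b - th a = 2 * pi * X"
        using n0 by (simp add: th_def X_def field_simps)
      then have "2 * pi * X = 2 * pi * j" using j by (simp add: algebra_simps)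
      then have "X = j" using pi_gt_zero by (metis mult_cancel_left mult_eq_0_iff pi_neq_zero zero_neq_numeral)
      then have "(real b - real a) / real n = j" by (simp add: X_def)
      then have "real b - real a = j * real n" using n0 by (simp add: field_simps)
      then have "real_of_int (int b - int a) = real_of_int (j * int n)" by simp
      then have "int b - int a = j * int n" by (simp only: of_int_eq_iff)
      then show False using int_contra ab by blast
    qed
    moreover have "cos (th b - th a) \<le> 1" by simp
    ultimately have "2 - 2 * cos (th b - th a) > 0" by linarith
    then show "uu n c a b > 0" using uu_c[OF ab(1,2)] al_pos by simp
  qed
  have d0: "pdiff 0 (nbody_V n m) c = - m * al"
    using darb n0 cth(1)[of 0] unfolding darboux_point_def by (simp add: th_def)
  have g0: "pdiff 0 (nbody_V n m) c = Gf n m 0 0 c" using pdiff1[OF pos_c n0(1), of 0 m] by simp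
  define h0 where "h0 x = -(m*m) * (al - al * cos x) / (al * sqrt (2 - 2 * cos x))^3" for x
  have "Gf n m 0 0 c = (\<Sum>b\<in>{..<n}-{0}. h0 (th b))"
    unfolding Gf_def
  proof (intro sum.cong refl)
    fix b assume "b \<in> {..<n}-{0}"
    then have b: "b < n" by auto
    show "-(m*m) * (c (0+0) - c (b+0)) / sqrt (uu n c 0 b)^3 = h0 (th b)"
      using cth(1)[OF b] cth(1)[OF n0(1)] sq_uu[OF n0(1) b] by (simp add: h0_def th_def)
  qed
  also have "\<dots> = (\<Sum>k=1..n-1. h0 (2*pi*real 0/real n + 2*pi*real k/real n))"
    unfolding th_def by (rule reindex) (simp_all add: h0_def n0)
  also have "\<dots> = (\<Sum>k=1..n-1. -(m*m)/(4*al^2) * (1 / sin (pi*real k/real n)))"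
  proof (intro sum.cong refl)
    fix k assume k: "k \<in> {1..n-1}"
    define x where "x = pi*real k/real n"
    have sx: "sin x > 0" using sin_pos_k[of k n] k unfolding x_def by auto
    have e: "2*pi*real 0/real n + 2*pi*real k/real n = 2*x" by (simp add: x_def)
    have cd: "cos (2*x) = 1 - 2 * sin x ^ 2" by (rule cos_double_sin)
    show "h0 (2*pi*real 0/real n + 2*pi*real k/real n) = -(m*m)/(4*al^2) * (1 / sin (pi*real k/real n))"
      apply (unfold e h0_def)
      apply (unfold sqrt_2x[OF sx])
      apply (unfold cd x_def[symmetric])
      apply (rule dar_alg)
      using sx al_pos by auto
  qed
  also have "\<dots> = -(m*m)/(4*al^2) * S"
    unfolding S_def by (simp add: sum_distrib_left)
  finally have "- m * al = -(m*m)/(4*al^2) * S" using d0 g0 by simp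
  then have S_eq: "S = 4 * al^3 / m" by (rule S_alg[OF m_pos al_pos])
  have Spos: "S > 0" using S_eq m_pos al_pos by simp
  have sums: "(\<Sum>k=1..n-1. (P * (1 - cos (4*(pi*real k/real n))) + Q * sin (4*(pi*real k/real n)) - 6 * Z * sin (2*(pi*real k/real n)))
          / (16 * al^3 * sin (pi*real k/real n) ^ 3)) = P * 8 * (S - T) / (16 * al^3)" for P Q Z
  proof -
    have "(\<Sum>k=1..n-1. (P * (1 - cos (4*(pi*real k/real n))) + Q * sin (4*(pi*real k/real n)) - 6 * Z * sin (2*(pi*real k/real n)))
          / (16 * al^3 * sin (pi*real k/real n) ^ 3))
        = (\<Sum>k=1..n-1. (1/(16*al^3)) * (P * ((1 - cos (4*(pi*real k/real n))) / sin (pi*real k/real n) ^ 3)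
             + Q * (sin (4*(pi*real k/real n)) / sin (pi*real k/real n) ^ 3) - 6 * Z * (sin (2*(pi*real k/real n)) / sin (pi*real k/real n) ^ 3)))"
    proof (intro sum.cong refl)
      fix k assume "k \<in> {1..n-1}"
      then have "sin (pi*real k/real n) \<noteq> 0" by (rule sin_ne_k)
      then show "(P * (1 - cos (4*(pi*real k/real n))) + Q * sin (4*(pi*real k/real n)) - 6 * Z * sin (2*(pi*real k/real n)))
          / (16 * al^3 * sin (pi*real k/real n) ^ 3)
        = (1/(16*al^3)) * (P * ((1 - cos (4*(pi*real k/real n))) / sin (pi*real k/real n) ^ 3)
             + Q * (sin (4*(pi*real k/real n)) / sin (pi*real k/real n) ^ 3) - 6 * Z * (sin (2*(pi*real k/real n)) / sin (pi*real k/real n) ^ 3))"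
        using al_pos by (simp add: field_simps)
    qed
    also have "\<dots> = (1/(16*al^3)) * (P * (\<Sum>k=1..n-1. (1 - cos (4*(pi*real k/real n))) / sin (pi*real k/real n) ^ 3)
             + Q * (\<Sum>k=1..n-1. sin (4*(pi*real k/real n)) / sin (pi*real k/real n) ^ 3)
             - (6 * Z) * (\<Sum>k=1..n-1. sin (2*(pi*real k/real n)) / sin (pi*real k/real n) ^ 3))"
      by (rule sum_lin)
    also have "\<dots> = P * 8 * (S - T) / (16 * al^3)"
      unfolding ts1[OF n2] ts_zero[OF n2] S_def[symmetric] T_def[symmetric] using al_pos by (simp add: field_simps)
    finally show ?thesis .
  qed
  have lam: "m * (P * 8 * (S - T) / (16 * al^3)) = (2 - 2 * T * inverse S) * P" for P
    using m_pos al_pos Spos unfolding S_eq by (simp add: field_simps power2_eq_square power3_eq_cube)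
  have main0: "matvec (2*n) (Wmat n m c) v (i+0) = (2 - 2 * T * inverse S) * v i" if i: "i < n" for i
  proof -
    have tm: "(v i - v b) * Ef n m c i b 0 0 + (v (i+n) - v (b+n)) * Ef n m c i b n 0 = m*m * F0 al A B (th i) (th b)"
      if b: "b < n" "b \<noteq> i" for b
    proof -
      define R where "R = sqrt (uu n c i b)"
      define X0 where "X0 = c i - c b"
      define X1 where "X1 = c (i+n) - c (b+n)"
      define w0 where "w0 = v i - v b"
      define w1 where "w1 = v (i+n) - v (b+n)"
      define zz where "zz = sin (th b - th i)"
      have e00: "Ef n m c i b 0 0 = -(m*m) * (1 / R^3 - 3*X0*X0/R^5)" unfolding Ef_def R_def X0_def by simp
      have en0: "Ef n m c i b n 0 = -(m*m) * (0 / R^3 - 3*X1*X0/R^5)" unfolding Ef_def R_def X0_def X1_def using n0 by simp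
      have R2: "R^2 = uu n c i b" unfolding R_def by (rule real_sqrt_pow2) (simp add: uu_def)
      have "uu n c i b > 0" using pos_c i b(1) b(2)[symmetric] by blast
      then have Rnz: "R \<noteq> 0" unfolding R_def by simp
      have key: "2*X0*(X0*w0 + X1*w1) = uu n c i b * (w0 - 2*B*zz)"
        by (rule idx'(1)[where pc = "cos (th i)" and ps = "sin (th i)" and qc = "cos (th b)" and qs = "sin (th b)" and al = al and A = A and B = B])
           (simp_all add: X0_def X1_def w0_def w1_def zz_def cth[OF i] cth[OF b(1)] vth[OF i] vth[OF b(1)] ff_exp gg_exp sin_diff uu_def
              sin_cos_squared_add sin_cos_squared_add2 algebra_simps)
      have "(v i - v b) * Ef n m c i b 0 0 + (v (i+n) - v (b+n)) * Ef n m c i b n 0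
          = w0 * (-(m*m) * (1 / R^3 - 3*X0*X0/R^5)) + w1 * (-(m*m) * (0 / R^3 - 3*X1*X0/R^5))"
        unfolding e00 en0 w0_def w1_def ..
      also have "\<dots> = (m*m) * ((w0/2 - 3*B*zz)/R^3)" by (rule algE0[OF R2 Rnz key])
      also have "\<dots> = m*m * F0 al A B (th i) (th b)"
        unfolding F0_def R_def sq_uu[OF i b(1)] w0_def zz_def vth[OF i] vth[OF b(1)] by simp
      finally show ?thesis .
    qed
    have "matvec (2*n) (Wmat n m c) v (i+0) = (1/m) * (\<Sum>b\<in>{..<n}-{i}. (v i - v b) * Ef n m c i b 0 0 + (v (i+n) - v (b+n)) * Ef n m c i b n 0)"
      by (rule Wv_general[OF pos_c i]) simp
    also have "\<dots> = (1/m) * (\<Sum>b\<in>{..<n}-{i}. m*m * F0 al A B (th i) (th b))"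
      by (intro arg_cong[where f = "\<lambda>x. (1/m)*x"] sum.cong refl tm) auto
    also have "\<dots> = m * (\<Sum>b\<in>{..<n}-{i}. F0 al A B (th i) (th b))"
      using m_pos by (simp add: sum_distrib_left[symmetric])
    also have "(\<Sum>b\<in>{..<n}-{i}. F0 al A B (th i) (th b)) = (\<Sum>k=1..n-1. F0 al A B (th i) (th i + 2*pi*real k/real n))"
      unfolding th_def by (rule reindex[OF _ i]) (rule F0_per)
    also have "\<dots> = (\<Sum>k=1..n-1. (ff A B (th i) * (1 - cos (4*(pi*real k/real n))) + gg A B (th i) * sin (4*(pi*real k/real n)) - 6 * B * sin (2*(pi*real k/real n)))
          / (16 * al^3 * sin (pi*real k/real n) ^ 3))"
    proof (intro sum.cong refl)
      fix k assume k: "k \<in> {1..n-1}"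
      have sx: "sin (pi*real k/real n) > 0" using sin_pos_k[of k n] k by auto
      have e: "th i + 2*pi*real k/real n = th i + 2*(pi*real k/real n)" by simp
      show "F0 al A B (th i) (th i + 2*pi*real k/real n) = (ff A B (th i) * (1 - cos (4*(pi*real k/real n))) + gg A B (th i) * sin (4*(pi*real k/real n)) - 6 * B * sin (2*(pi*real k/real n)))
          / (16 * al^3 * sin (pi*real k/real n) ^ 3)"
        unfolding e by (rule per_k(1)[OF sx al_pos])
    qed
    also have "\<dots> = ff A B (th i) * 8 * (S - T) / (16 * al^3)" by (rule sums)
    finally have X: "matvec (2*n) (Wmat n m c) v (i+0) = m * (ff A B (th i) * 8 * (S - T) / (16 * al^3))" .
    show ?thesis by (simp only: X lam vth(1)[OF i])
  qed
  have main1: "matvec (2*n) (Wmat n m c) v (i+n) = (2 - 2 * T * inverse S) * v (i+n)" if i: "i < n" for i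
  proof -
    have tm: "(v i - v b) * Ef n m c i b 0 n + (v (i+n) - v (b+n)) * Ef n m c i b n n = m*m * F1 al A B (th i) (th b)"
      if b: "b < n" "b \<noteq> i" for b
    proof -
      define R where "R = sqrt (uu n c i b)"
      define X0 where "X0 = c i - c b"
      define X1 where "X1 = c (i+n) - c (b+n)"
      define w0 where "w0 = v i - v b"
      define w1 where "w1 = v (i+n) - v (b+n)"
      define zz where "zz = sin (th b - th i)"
      have e00: "Ef n m c i b 0 n = -(m*m) * (0 / R^3 - 3*X0*X1/R^5)" unfolding Ef_def R_def X0_def X1_def using n0 by simp
      have en0: "Ef n m c i b n n = -(m*m) * (1 / R^3 - 3*X1*X1/R^5)" unfolding Ef_def R_def X1_def by simp
      have R2: "R^2 = uu n c i b" unfolding R_def by (rule real_sqrt_pow2) (simp add: uu_def)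
      have "uu n c i b > 0" using pos_c i b(1) b(2)[symmetric] by blast
      then have Rnz: "R \<noteq> 0" unfolding R_def by simp
      have key: "2*X1*(X0*w0 + X1*w1) = uu n c i b * (w1 - 2*A*zz)"
        by (rule idx'(2)[where pc = "cos (th i)" and ps = "sin (th i)" and qc = "cos (th b)" and qs = "sin (th b)" and al = al and A = A and B = B])
           (simp_all add: X0_def X1_def w0_def w1_def zz_def cth[OF i] cth[OF b(1)] vth[OF i] vth[OF b(1)] ff_exp gg_exp sin_diff uu_def
              sin_cos_squared_add sin_cos_squared_add2 algebra_simps)
      have "(v i - v b) * Ef n m c i b 0 n + (v (i+n) - v (b+n)) * Ef n m c i b n n
          = w0 * (-(m*m) * (0 / R^3 - 3*X0*X1/R^5)) + w1 * (-(m*m) * (1 / R^3 - 3*X1*X1/R^5))"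
        unfolding e00 en0 w0_def w1_def ..
      also have "\<dots> = (m*m) * ((w1/2 - 3*A*zz)/R^3)" by (rule algE1[OF R2 Rnz key])
      also have "\<dots> = m*m * F1 al A B (th i) (th b)"
        unfolding F1_def R_def sq_uu[OF i b(1)] w1_def zz_def vth[OF i] vth[OF b(1)] by simp
      finally show ?thesis .
    qed
    have "matvec (2*n) (Wmat n m c) v (i+n) = (1/m) * (\<Sum>b\<in>{..<n}-{i}. (v i - v b) * Ef n m c i b 0 n + (v (i+n) - v (b+n)) * Ef n m c i b n n)"
      by (rule Wv_general[OF pos_c i]) simp
    also have "\<dots> = (1/m) * (\<Sum>b\<in>{..<n}-{i}. m*m * F1 al A B (th i) (th b))"
      by (intro arg_cong[where f = "\<lambda>x. (1/m)*x"] sum.cong refl tm) auto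
    also have "\<dots> = m * (\<Sum>b\<in>{..<n}-{i}. F1 al A B (th i) (th b))"
      using m_pos by (simp add: sum_distrib_left[symmetric])
    also have "(\<Sum>b\<in>{..<n}-{i}. F1 al A B (th i) (th b)) = (\<Sum>k=1..n-1. F1 al A B (th i) (th i + 2*pi*real k/real n))"
      unfolding th_def by (rule reindex[OF _ i]) (rule F1_per)
    also have "\<dots> = (\<Sum>k=1..n-1. (gg A B (th i) * (1 - cos (4*(pi*real k/real n))) - ff A B (th i) * sin (4*(pi*real k/real n)) - 6 * A * sin (2*(pi*real k/real n)))
          / (16 * al^3 * sin (pi*real k/real n) ^ 3))"
    proof (intro sum.cong refl)
      fix k assume k: "k \<in> {1..n-1}"
      have sx: "sin (pi*real k/real n) > 0" using sin_pos_k[of k n] k by auto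
      have e: "th i + 2*pi*real k/real n = th i + 2*(pi*real k/real n)" by simp
      show "F1 al A B (th i) (th i + 2*pi*real k/real n) = (gg A B (th i) * (1 - cos (4*(pi*real k/real n))) - ff A B (th i) * sin (4*(pi*real k/real n)) - 6 * A * sin (2*(pi*real k/real n)))
          / (16 * al^3 * sin (pi*real k/real n) ^ 3)"
        unfolding e by (rule per_k(2)[OF sx al_pos])
    qed
    also have "\<dots> = (\<Sum>k=1..n-1. (gg A B (th i) * (1 - cos (4*(pi*real k/real n))) + (- ff A B (th i)) * sin (4*(pi*real k/real n)) - 6 * A * sin (2*(pi*real k/real n)))
          / (16 * al^3 * sin (pi*real k/real n) ^ 3))" by simp
    also have "\<dots> = gg A B (th i) * 8 * (S - T) / (16 * al^3)" by (rule sums)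
    finally have X: "matvec (2*n) (Wmat n m c) v (i+n) = m * (gg A B (th i) * 8 * (S - T) / (16 * al^3))" .
    show ?thesis by (simp only: X lam vth(2)[OF i])
  qed
  show ?thesis
  proof (intro allI impI)
    fix k assume k: "k < 2*n"
    show "matvec (2*n) (Wmat n m c) v k = (2 - (2 * sin (pi / real n) / (1 - cos (pi / real n)))
            * inverse (\<Sum>j=1..n-1. 1 / sin (pi * real j / real n))) * v k"
    proof (cases "k < n")
      case True then show ?thesis using main0[OF True] by (simp add: S_def T_def)
    next
      case False
      then have "k = (k - n) + n" "k - n < n" using k by auto
      then show ?thesis using main1[of "k-n"] by (simp add: S_def T_def)
    qed
  qed
qed



theorem theorem14:
  fixes n :: nat and m \<alpha> lam :: real and c v :: "nat \<Rightarrow> real"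
  assumes n2: "n \<ge> 2" and m_pos: "m > 0" and alpha_pos: "\<alpha> > 0"
    and c_def: "\<And>i. i < n \<Longrightarrow> c i = \<alpha> * cos (2 * pi * real i / real n)
                          \<and> c (i + n) = \<alpha> * sin (2 * pi * real i / real n)"
    and darb: "darboux_point n m c"
    and v_def: "\<And>i. i < n \<Longrightarrow> v i = cos (4 * pi * real i / real n)
                          \<and> v (i + n) = sin (4 * pi * real i / real n)"
    and lam_def: "lam = 2 - (2 * sin (pi / real n) / (1 - cos (pi / real n)))
                        * inverse (\<Sum>j=1..n-1. 1 / sin (pi * real j / real n))"
  shows "(\<forall>k<2*n. matvec (2*n) (Wmat n m c) v k = lam * v k)
       \<and> (\<forall>k<2*n. matvec (2*n) (Jinv n) (matvec (2*n) (Wmat n m c) (matvec (2*n) (Jmat n) v)) k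
                   = lam * v k)"
proof -
  have a: "2*(2*pi*real i/real n) = 4*pi*real i/real n" for i by simp
  have v1: "v i = ff 1 0 (2*pi*real i/real n) \<and> v (i+n) = gg 1 0 (2*pi*real i/real n)" if "i < n" for i
    using v_def[OF that] unfolding ff_def gg_def a by simp
  have P1: "\<forall>k<2*n. matvec (2*n) (Wmat n m c) v k = lam * v k"
    using Wmain[OF n2 m_pos alpha_pos c_def darb v1] unfolding lam_def by simp
  define w where "w = matvec (2*n) (Jmat n) v"
  have w1: "w i = ff 0 1 (2*pi*real i/real n) \<and> w (i+n) = gg 0 1 (2*pi*real i/real n)" if i: "i < n" for i
  proof -
    have "w i = - v (i+n)" unfolding w_def using Jmat_mv[of i n v] i by simp
    moreover have "w (i+n) = v i" unfolding w_def using Jmat_mv[of "i+n" n v] i by simp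
    ultimately show ?thesis using v_def[OF i] unfolding ff_def gg_def a by simp
  qed
  have P2: "\<forall>k<2*n. matvec (2*n) (Wmat n m c) w k = lam * w k"
    using Wmain[OF n2 m_pos alpha_pos c_def darb w1] unfolding lam_def by simp
  have "\<forall>k<2*n. matvec (2*n) (Jinv n) (matvec (2*n) (Wmat n m c) w) k = lam * v k"
  proof (intro allI impI)
    fix k assume k: "k < 2*n"
    show "matvec (2*n) (Jinv n) (matvec (2*n) (Wmat n m c) w) k = lam * v k"
    proof (cases "k < n")
      case True
      have "matvec (2*n) (Jinv n) (matvec (2*n) (Wmat n m c) w) k = matvec (2*n) (Wmat n m c) w (k+n)"
        using Jinv_mv[OF k] True by simp
      also have "\<dots> = lam * w (k+n)" using P2 True by simp
      also have "w (k+n) = v k" unfolding w_def using Jmat_mv[of "k+n" n v] True by simp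
      finally show ?thesis .
    next
      case False
      have kn: "k - n < n" using k False by linarith
      have "matvec (2*n) (Jinv n) (matvec (2*n) (Wmat n m c) w) k = - matvec (2*n) (Wmat n m c) w (k-n)"
        using Jinv_mv[OF k] False by simp
      also have "\<dots> = - (lam * w (k-n))" using P2 k False by simp
      also have "w (k-n) = - v (k - n + n)" unfolding w_def using Jmat_mv[of "k-n" n v] kn by simp
      also have "k - n + n = k" using False by simp
      finally show ?thesis by simp
    qed
  qed
  then show ?thesis using P1 unfolding w_def by simp
qed


end
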